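(* Let $\mathbf K$ be a commutative field, $p\in\mathbb N$, and $\alpha:\mathcal M_p\to\mathbf K$. Then $\alpha$ is an automatic function (with input alphabet $\{0,\dots,p-1\}$ and output alphabet $\mathbf K$) if and only if $\alpha\in\mathrm{Rec}_p(\mathbf K)$ and the shift-monoid of $\alpha$ is finite.
   Context: $\mathcal M_p$ is the free monoid of words over $\{0,\dots,p-1\}$. For $A:\mathcal M_p\to\mathbf K$ and $S\in\mathcal M_p$, $(\rho(S)A)[U]=A[US]$. $\mathrm{Rec}_p(\mathbf K)$ is the set of $A$ whose span $\overline{A}^{rec}$ of $\{\rho(S)A:S\in\mathcal M_p\}$ is finite-dimensional, and the shift-monoid of $A$ is the set of restrictions of the maps $\rho(S)$ to $\overline{A}^{rec}$. An initial automaton with input alphabet $X$ and output alphabet $Y$ consists of a set $\mathcal V$ of states, an initial state $v_*\in\mathcal V$, a transition function $\delta:\mathcal V\times X\to\mathcal V$ and an output function $w:\mathcal V\to Y$; it defines $\alpha:\mathcal M_X\to Y$ by $\alpha(x_1\dots x_n)=w(v)$ where $v$ is reached from $v_*$ by successively applying $\delta(\cdot,x_1),\dots,\delta(\cdot,x_n)$. It is finite-state if $X$ and $\mathcal V$ are finite. A function $\mathcal M_X\to Y$ is automatic if it is defined by some finite-state initial automaton. *)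

theory Defs
  imports Complex_Main "HOL-Library.FuncSet" "HOL-Library.Function_Algebras"
begin

text \<open>Words of M_p are lists over {0..p-1}, i.e. elements of lists {..<p}.
 Functions M_p -> K are represented as nat list => 'k; values outside M_p are
 irrelevant (the shift operator below sets them to 0).\<close>

definition fscale :: "'k::field \<Rightarrow> (nat list \<Rightarrow> 'k) \<Rightarrow> (nat list \<Rightarrow> 'k)" where
  "fscale c f = (\<lambda>U. c * f U)"

definition rho :: "nat \<Rightarrow> nat list \<Rightarrow> (nat list \<Rightarrow> 'k::field) \<Rightarrow> (nat list \<Rightarrow> 'k)" where
  "rho p S A = (\<lambda>U. if U \<in> lists {..<p} then A (U @ S) else 0)"

definition shift_orbit :: "nat \<Rightarrow> (nat list \<Rightarrow> 'k::field) \<Rightarrow> (nat list \<Rightarrow> 'k) set" where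
  "shift_orbit p A = {rho p S A | S. S \<in> lists {..<p}}"

definition rec_closure :: "nat \<Rightarrow> (nat list \<Rightarrow> 'k::field) \<Rightarrow> (nat list \<Rightarrow> 'k) set" where
  "rec_closure p A = module.span fscale (shift_orbit p A)"

definition Rec :: "nat \<Rightarrow> (nat list \<Rightarrow> 'k::field) set" where
  "Rec p = {A. \<exists>B. finite B \<and> rec_closure p A = module.span fscale B}"

definition shift_monoid :: "nat \<Rightarrow> (nat list \<Rightarrow> 'k::field)
     \<Rightarrow> ((nat list \<Rightarrow> 'k) \<Rightarrow> (nat list \<Rightarrow> 'k)) set" where
  "shift_monoid p A = {restrict (rho p S) (rec_closure p A) | S. S \<in> lists {..<p}}"

text \<open>Automatic: computed by a finite-state initial automaton with input alphabet
 {0..p-1}; states are (w.l.o.g.) natural numbers forming a finite set V.\<close>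
definition automatic :: "nat \<Rightarrow> (nat list \<Rightarrow> 'y) \<Rightarrow> bool" where
  "automatic p \<alpha> \<longleftrightarrow>
     (\<exists>(V::nat set) v0 (\<delta>::nat \<Rightarrow> nat \<Rightarrow> nat) (w::nat \<Rightarrow> 'y).
        finite V \<and> v0 \<in> V \<and> (\<forall>v\<in>V. \<forall>x<p. \<delta> v x \<in> V) \<and>
        (\<forall>u\<in>lists {..<p}. \<alpha> u = w (fold (\<lambda>x v. \<delta> v x) u v0)))"

end

theory Submission
  imports Defs
begin

lemma fscale_module: "module (fscale :: 'k::field \<Rightarrow> (nat list \<Rightarrow> 'k) \<Rightarrow> _)"
  by unfold_locales (auto simp: fscale_def fun_eq_iff algebra_simps)

lemma rho_zero: "rho p S 0 = 0"
  by (auto simp: rho_def fun_eq_iff)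

lemma rho_lin: "rho p S (fscale c f + g) = fscale c (rho p S f) + rho p S g"
  by (auto simp: rho_def fun_eq_iff fscale_def)

lemma rho_comp: "S \<in> lists {..<p} \<Longrightarrow> rho p S (rho p T A) = rho p (S @ T) A"
  by (auto simp: rho_def fun_eq_iff)

lemma span_ext:
  assumes "f \<in> module.span fscale Og" "\<And>g. g \<in> Og \<Longrightarrow> rho p S g = rho p T g"
  shows "rho p S f = rho p T (f :: nat list \<Rightarrow> 'k::field)"
proof -
  interpret m: module "fscale :: 'k \<Rightarrow> (nat list \<Rightarrow> 'k) \<Rightarrow> _" by (rule fscale_module)
  show ?thesis using assms(1)
  proof (induct rule: m.span_induct_alt)
    case base show ?case by (simp only: rho_zero)
  next
    case (step c x y) then show ?case by (simp only: rho_lin assms(2))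
  qed
qed

lemma span_closed:
  assumes "f \<in> module.span fscale Og" "\<And>g. g \<in> Og \<Longrightarrow> rho p S g \<in> module.span fscale Og"
  shows "rho p S f \<in> module.span fscale (Og :: (nat list \<Rightarrow> 'k::field) set)"
proof -
  interpret m: module "fscale :: 'k \<Rightarrow> (nat list \<Rightarrow> 'k) \<Rightarrow> _" by (rule fscale_module)
  show ?thesis using assms(1)
  proof (induct rule: m.span_induct_alt)
    case base show ?case by (simp only: rho_zero m.span_zero)
  next
    case (step c x y) then show ?case
      unfolding rho_lin by (metis m.span_add m.span_scale assms(2))
  qed
qed

lemma finite_image_factor:
  assumes "finite (g ` A)" "\<And>a b. a \<in> A \<Longrightarrow> b \<in> A \<Longrightarrow> g a = g b \<Longrightarrow> f a = f b"
  shows "finite (f ` A)"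
proof -
  have "f ` A \<subseteq> (\<lambda>y. f (SOME a. a \<in> A \<and> g a = y)) ` (g ` A)"
  proof
    fix z assume "z \<in> f ` A"
    then obtain a where a: "a \<in> A" "z = f a" by auto
    have "\<exists>b. b \<in> A \<and> g b = g a" using a by auto
    then have "(SOME b. b \<in> A \<and> g b = g a) \<in> A \<and> g (SOME b. b \<in> A \<and> g b = g a) = g a"
      by (rule someI_ex)
    then have "f (SOME b. b \<in> A \<and> g b = g a) = f a" using assms(2) a by blast
    then show "z \<in> (\<lambda>y. f (SOME a. a \<in> A \<and> g a = y)) ` (g ` A)" using a by force
  qed
  then show ?thesis using assms(1) finite_subset by blast
qed

lemma automatic_from_finite:
  fixes Q :: "'q set"
  assumes "finite Q" "qs \<in> Q" "\<And>q x. q \<in> Q \<Longrightarrow> x < p \<Longrightarrow> d q x \<in> Q"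
    and "\<And>u. u \<in> lists {..<p} \<Longrightarrow> \<alpha> u = out (fold (\<lambda>x q. d q x) u qs)"
  shows "automatic p \<alpha>"
proof -
  obtain e where e: "bij_betw e {..<card Q} Q"
    using assms(1) ex_bij_betw_nat_finite lessThan_atLeast0 by metis
  define ie where "ie = inv_into {..<card Q} e"
  have ie: "bij_betw ie Q {..<card Q}" unfolding ie_def by (rule bij_betw_inv_into[OF e])
  have eie: "q \<in> Q \<Longrightarrow> e (ie q) = q" for q unfolding ie_def
    by (meson bij_betw_inv_into_right e)
  define \<delta> where "\<delta> = (\<lambda>v x. ie (d (e v) x))"
  define w where "w = (\<lambda>v. out (e v))"
  have cl: "u \<in> lists {..<p} \<Longrightarrow> q \<in> Q \<Longrightarrow> fold (\<lambda>x v. \<delta> v x) u (ie q) = ie (fold (\<lambda>x q. d q x) u q)" for u q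
  proof (induction u arbitrary: q)
    case Nil then show ?case by simp
  next
    case (Cons a u)
    then show ?case using assms(3)[of q a] by (simp add: \<delta>_def eie)
  qed
  have fq: "u \<in> lists {..<p} \<Longrightarrow> q \<in> Q \<Longrightarrow> fold (\<lambda>x q. d q x) u q \<in> Q" for u q
    by (induction u arbitrary: q) (auto simp: assms(3))
  show ?thesis unfolding automatic_def
  proof (intro exI conjI ballI allI impI)
    show "finite {..<card Q}" by simp
    show "ie qs \<in> {..<card Q}" using ie assms(2) bij_betwE by blast
    show "\<delta> v x \<in> {..<card Q}" if "v \<in> {..<card Q}" "x < p" for v x
      unfolding \<delta>_def using that e ie assms(3) bij_betwE by metis
    show "\<alpha> u = w (fold (\<lambda>x v. \<delta> v x) u (ie qs))" if "u \<in> lists {..<p}" for u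
      using that cl[OF that assms(2)] fq[OF that assms(2)] assms(4)[OF that] by (simp add: w_def eie)
  qed
qed

lemma orbit_eq: "shift_orbit p A = (\<lambda>S. rho p S A) ` lists {..<p}"
  by (auto simp: shift_orbit_def)

lemma monoid_eq: "shift_monoid p A = (\<lambda>S. restrict (rho p S) (rec_closure p A)) ` lists {..<p}"
  by (auto simp: shift_monoid_def)

lemma orbit_in_closure: "shift_orbit p A \<subseteq> rec_closure p (A :: nat list \<Rightarrow> 'k::field)"
proof -
  interpret m: module "fscale :: 'k \<Rightarrow> (nat list \<Rightarrow> 'k) \<Rightarrow> _" by (rule fscale_module)
  show ?thesis unfolding rec_closure_def by (rule m.span_superset)
qed

lemma rho_orbit: "S \<in> lists {..<p} \<Longrightarrow> g \<in> shift_orbit p A \<Longrightarrow> rho p S g \<in> shift_orbit p A"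
proof -
  assume S: "S \<in> lists {..<p}" and g: "g \<in> shift_orbit p A"
  then obtain T where T: "T \<in> lists {..<p}" "g = rho p T A" unfolding orbit_eq by blast
  have "S @ T \<in> lists {..<p}" using S T by simp
  then show ?thesis unfolding orbit_eq T(2) rho_comp[OF S] by blast
qed

lemma rho_closure: "S \<in> lists {..<p} \<Longrightarrow> f \<in> rec_closure p A \<Longrightarrow> rho p S f \<in> rec_closure p (A :: nat list \<Rightarrow> 'k::field)"
  unfolding rec_closure_def
  by (rule span_closed) (use rho_orbit orbit_in_closure[unfolded rec_closure_def] in blast)+

lemma fold_in: "u \<in> lists {..<p} \<Longrightarrow> q \<in> V \<Longrightarrow> (\<forall>v\<in>V. \<forall>x<p. \<delta> v x \<in> V) \<Longrightarrow> fold (\<lambda>x v. \<delta> v x) u q \<in> V"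
  by (induction u arbitrary: q) auto

theorem mainTheorem17:
  fixes p :: nat and \<alpha> :: "nat list \<Rightarrow> 'k::field"
  shows "automatic p \<alpha> \<longleftrightarrow> \<alpha> \<in> Rec p \<and> finite (shift_monoid p \<alpha>)"
proof
  assume "automatic p \<alpha>"
  then obtain V v0 \<delta> w where V: "finite V" "v0 \<in> V" "\<forall>v\<in>V. \<forall>x<p. (\<delta>::nat \<Rightarrow> nat \<Rightarrow> nat) v x \<in> V"
    and a: "\<forall>u\<in>lists {..<p}. \<alpha> u = w (fold (\<lambda>x v. \<delta> v x) u v0)"
    unfolding automatic_def by blast
  define O' where "O' = shift_orbit p \<alpha>"
  have finO: "finite O'"
    unfolding O'_def orbit_eq
  proof (rule finite_image_factor[where g = "\<lambda>S. restrict (\<lambda>v. fold (\<lambda>x v. \<delta> v x) S v) V"])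
    have "(\<lambda>S. restrict (\<lambda>v. fold (\<lambda>x v. \<delta> v x) S v) V) ` lists {..<p} \<subseteq> V \<rightarrow>\<^sub>E V"
    proof (rule image_subsetI)
      fix S assume "S \<in> lists {..<p}"
      then show "restrict (\<lambda>v. fold (\<lambda>x v. \<delta> v x) S v) V \<in> V \<rightarrow>\<^sub>E V"
        using fold_in[OF _ _ V(3)] by (simp add: PiE_iff)
    qed
    then show "finite ((\<lambda>S. restrict (\<lambda>v. fold (\<lambda>x v. \<delta> v x) S v) V) ` lists {..<p})"
      by (rule finite_subset) (simp add: finite_PiE V(1))
  next
    fix S T assume ST: "S \<in> lists {..<p}" "T \<in> lists {..<p}"
      "restrict (\<lambda>v. fold (\<lambda>x v. \<delta> v x) S v) V = restrict (\<lambda>v. fold (\<lambda>x v. \<delta> v x) T v) V"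
    show "rho p S \<alpha> = rho p T \<alpha>"
    proof
      fix U
      show "rho p S \<alpha> U = rho p T \<alpha> U"
      proof (cases "U \<in> lists {..<p}")
        case True
        have inV: "fold (\<lambda>x v. \<delta> v x) U v0 \<in> V" by (rule fold_in[OF True V(2) V(3)])
        have "fold (\<lambda>x v. \<delta> v x) S (fold (\<lambda>x v. \<delta> v x) U v0) = fold (\<lambda>x v. \<delta> v x) T (fold (\<lambda>x v. \<delta> v x) U v0)"
          using fun_cong[OF ST(3), of "fold (\<lambda>x v. \<delta> v x) U v0"] inV by simp
        moreover have "U @ S \<in> lists {..<p}" "U @ T \<in> lists {..<p}" using True ST by auto
        ultimately show ?thesis using True a by (simp add: rho_def)
      next
        case False then show ?thesis by (simp add: rho_def)
      qed
    qed
  qed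
  have rec: "\<alpha> \<in> Rec p" unfolding Rec_def rec_closure_def
    using finO unfolding O'_def by (intro CollectI exI[of _ "shift_orbit p \<alpha>"] conjI refl)
  have "finite (shift_monoid p \<alpha>)"
    unfolding monoid_eq
  proof (rule finite_image_factor[where g = "\<lambda>S. restrict (rho p S) O'"])
    have "(\<lambda>S. restrict (rho p S) O') ` lists {..<p} \<subseteq> O' \<rightarrow>\<^sub>E O'"
    proof (rule image_subsetI)
      fix S assume "S \<in> lists {..<p}"
      then show "restrict (rho p S) O' \<in> O' \<rightarrow>\<^sub>E O'"
        using rho_orbit[of S p _ \<alpha>] unfolding O'_def by (simp add: PiE_iff)
    qed
    then show "finite ((\<lambda>S. restrict (rho p S) O') ` lists {..<p})"
      by (rule finite_subset) (simp add: finite_PiE finO)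
  next
    fix S T assume ST: "S \<in> lists {..<p}" "T \<in> lists {..<p}"
      "restrict (rho p S) O' = restrict (rho p T) O'"
    have "rho p S f = rho p T f" if "f \<in> rec_closure p \<alpha>" for f
      using that unfolding rec_closure_def
    proof (rule span_ext)
      fix g assume "g \<in> shift_orbit p \<alpha>"
      then show "rho p S g = rho p T g" using fun_cong[OF ST(3), of g] O'_def by simp
    qed
    then show "restrict (rho p S) (rec_closure p \<alpha>) = restrict (rho p T) (rec_closure p \<alpha>)"
      by auto
  qed
  with rec show "\<alpha> \<in> Rec p \<and> finite (shift_monoid p \<alpha>)" by blast
next
  assume "\<alpha> \<in> Rec p \<and> finite (shift_monoid p \<alpha>)"
  then have fin: "finite (shift_monoid p \<alpha>)" by blast
  define C where "C = rec_closure p \<alpha>"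
  define d :: "((nat list \<Rightarrow> 'k) \<Rightarrow> nat list \<Rightarrow> 'k) \<Rightarrow> nat \<Rightarrow> (nat list \<Rightarrow> 'k) \<Rightarrow> nat list \<Rightarrow> 'k"
    where "d = (\<lambda>q x. restrict (q \<circ> rho p [x]) C)"
  have dstep: "d (restrict (rho p S) C) x = restrict (rho p (S @ [x])) C"
    if "S \<in> lists {..<p}" "x < p" for S x
  proof
    fix f
    show "d (restrict (rho p S) C) x f = restrict (rho p (S @ [x])) C f"
    proof (cases "f \<in> C")
      case True
      have "rho p [x] f \<in> C" using rho_closure[of "[x]" p f \<alpha>] True that C_def by simp
      then show ?thesis using True that by (simp add: d_def rho_comp)
    next
      case False then show ?thesis by (simp add: d_def)
    qed
  qed
  have fold_eq: "fold (\<lambda>x q. d q x) u (restrict (rho p []) C) = restrict (rho p u) C"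
    if "u \<in> lists {..<p}" for u
    using that
  proof (induction u rule: rev_induct)
    case Nil then show ?case by simp
  next
    case (snoc x u)
    then have "u \<in> lists {..<p}" "x < p" by auto
    then show ?case using snoc.IH dstep by (simp del: restrict_apply)
  qed
  have meq: "shift_monoid p \<alpha> = (\<lambda>S. restrict (rho p S) C) ` lists {..<p}"
    unfolding C_def by (rule monoid_eq)
  have r0: "rho p [] \<alpha> \<in> C"
  proof -
    have "rho p [] \<alpha> \<in> shift_orbit p \<alpha>" unfolding orbit_eq by (rule imageI) simp
    then show ?thesis using orbit_in_closure[of p \<alpha>] unfolding C_def by (rule subsetD[rotated])
  qed
  show "automatic p \<alpha>"
  proof (rule automatic_from_finite[where Q = "shift_monoid p \<alpha>" and qs = "restrict (rho p []) C"
        and d = d and out = "\<lambda>q. q (rho p [] \<alpha>) []"])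
    show "finite (shift_monoid p \<alpha>)" by (rule fin)
    show "restrict (rho p []) C \<in> shift_monoid p \<alpha>" unfolding meq
      by (rule image_eqI[of _ _ "[]"]) simp_all
    show "d q x \<in> shift_monoid p \<alpha>" if "q \<in> shift_monoid p \<alpha>" "x < p" for q x
    proof -
      obtain S where S: "S \<in> lists {..<p}" "q = restrict (rho p S) C"
        using \<open>q \<in> shift_monoid p \<alpha>\<close> unfolding meq by blast
      have Sx: "S @ [x] \<in> lists {..<p}" using S that by simp
      have "d q x = restrict (rho p (S @ [x])) C" unfolding S(2) by (rule dstep[OF S(1) that(2)])
      then show ?thesis unfolding meq using Sx by (rule image_eqI)
    qed
    show "\<alpha> u = fold (\<lambda>x q. d q x) u (restrict (rho p []) C) (rho p [] \<alpha>) []"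
      if "u \<in> lists {..<p}" for u
    proof -
      have "fold (\<lambda>x q. d q x) u (restrict (rho p []) C) (rho p [] \<alpha>) [] = rho p u (rho p [] \<alpha>) []"
        unfolding fold_eq[OF that] using r0 by (simp del: restrict_apply add: restrict_apply')
      also have "\<dots> = rho p u \<alpha> []" unfolding rho_comp[OF that] by simp
      also have "\<dots> = \<alpha> u" by (simp add: rho_def)
      finally show ?thesis by simp
    qed
  qed
qed

end
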